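(* Let $p,k,q,n$ be positive integers. If there exist an S-template with width $q$ and $n+1$ colors and an S-template with width $p$ and $k$ colors, then there exists an S-template with width $pq$ and $n+k$ colors.
   Context: A set $A \subseteq \mathbb{N}$ is sum-free if for all $(a,b)\in A^2$ (allowing $a=b$), $a+b \notin A$. For positive integers $p,n$, an S-template with $n$ colors and width $p$ is a partition of $\{1,\dots,p\}$ into $n$ sum-free subsets $A_1,\dots,A_n$ such that for every $i \in \{1,\dots,n-1\}$ (i.e. every subset except $A_n$) and all $(x,y)\in A_i^2$: if $x+y>p$ then $x+y-p \notin A_i$. *)

theory Defs
  imports Main
begin

definition sum_free :: "nat set \<Rightarrow> bool" where
  "sum_free A \<longleftrightarrow> (\<forall>a\<in>A. \<forall>b\<in>A. a + b \<notin> A)"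

definition S_template :: "nat \<Rightarrow> nat \<Rightarrow> (nat \<Rightarrow> nat set) \<Rightarrow> bool" where
  "S_template n p A \<longleftrightarrow>
     (\<Union>i\<in>{1..n}. A i) = {1..p} \<and>
     (\<forall>i\<in>{1..n}. \<forall>j\<in>{1..n}. i \<noteq> j \<longrightarrow> A i \<inter> A j = {}) \<and>
     (\<forall>i\<in>{1..n}. sum_free (A i)) \<and>
     (\<forall>i\<in>{1..n-1}. \<forall>x\<in>A i. \<forall>y\<in>A i. x + y > p \<longrightarrow> x + y - p \<notin> A i)"

end

theory Submission
  imports Defs
begin

lemma divl: "d < (p::nat) \<Longrightarrow> (p*c + d) div p = c"
  by simp
lemma rep_uniq:
  fixes p b b' c c' :: nat
  assumes "0 < b" "b \<le> p" "0 < b'" "b' \<le> p" "p*c + b = p*c' + b'"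
  shows "c = c' \<and> b = b'"
proof -
  have e1: "(p*c + (b-1)) div p = c" using assms(1,2) divl[of "b-1" p c] by linarith
  have e2: "(p*c' + (b'-1)) div p = c'" using assms(3,4) divl[of "b'-1" p c'] by linarith
  have "p*c + (b-1) = p*c' + (b'-1)" using assms by simp
  then have "c = c'" using e1 e2 by metis
  then show ?thesis using assms by simp
qed

lemma key_sum:
  fixes p a1 a2 a3 b1 b2 b3 :: nat
  assumes "0<b1" "b1\<le>p" "0<b2" "b2\<le>p" "0<b3" "b3\<le>p" "a1\<ge>1" "a2\<ge>1" "a3\<ge>1"
    and "p*(a1-1)+b1 + (p*(a2-1)+b2) = p*(a3-1)+b3"
  shows "(b1+b2 \<le> p \<and> b3 = b1+b2) \<or> (b1+b2 > p \<and> b3 = b1+b2-p \<and> a3 = a1+a2)"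
proof (cases "b1+b2 \<le> p")
  case True
  have "p*(a1-1+(a2-1)) + (b1+b2) = p*(a3-1)+b3" using assms(10) by (simp add: algebra_simps)
  then have "b3 = b1+b2" using rep_uniq[of "b1+b2" p b3] True assms by auto
  then show ?thesis using True by simp
next
  case False
  have "p*(a1-1+(a2-1)+1) + (b1+b2-p) = p*(a1-1)+b1 + (p*(a2-1)+b2)" using False by (simp add: distrib_left)
  also have "\<dots> = p*(a3-1)+b3" using assms(10) .
  finally have eq: "p*(a1-1+(a2-1)+1) + (b1+b2-p) = p*(a3-1)+b3" .
  have g: "0 < b1+b2-p" "b1+b2-p \<le> p" using False assms(2,4) by linarith+
  have "a1-1+(a2-1)+1 = a3-1 \<and> b1+b2-p = b3" using rep_uniq[OF g assms(5,6) eq] .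
  then show ?thesis using False assms(7,8,9) by linarith
qed

lemma key_wrap:
  fixes p q a1 a2 a3 b1 b2 b3 :: nat
  assumes "0<b1" "b1\<le>p" "0<b2" "b2\<le>p" "0<b3" "b3\<le>p" "a1\<ge>1" "a2\<ge>1" "a3\<ge>1"
    and "p*(a1-1)+b1 + (p*(a2-1)+b2) = p*(a3-1)+b3 + p*q"
  shows "(b1+b2 \<le> p \<and> b3 = b1+b2) \<or> (b1+b2 > p \<and> b3 = b1+b2-p \<and> a1+a2 > q \<and> a3 = a1+a2-q)"
proof (cases "b1+b2 \<le> p")
  case True
  have "p*(a1-1+(a2-1)) + (b1+b2) = p*(a3-1+q)+b3" using assms(10) by (simp add: algebra_simps)
  then have "b3 = b1+b2" using rep_uniq[of "b1+b2" p b3] True assms by auto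
  then show ?thesis using True by simp
next
  case False
  have "p*(a1-1+(a2-1)+1) + (b1+b2-p) = p*(a1-1)+b1 + (p*(a2-1)+b2)" using False by (simp add: distrib_left)
  also have "\<dots> = p*(a3-1+q)+b3" using assms(10) by (simp add: distrib_left)
  finally have eq: "p*(a1-1+(a2-1)+1) + (b1+b2-p) = p*(a3-1+q)+b3" .
  have g: "0 < b1+b2-p" "b1+b2-p \<le> p" using False assms(2,4) by linarith+
  have "a1-1+(a2-1)+1 = a3-1+q \<and> b1+b2-p = b3" using rep_uniq[OF g assms(5,6) eq] .
  then show ?thesis using False assms(7,8,9) by linarith
qed

theorem theorem2p6:
  fixes p k q n :: nat
  assumes "0 < p" "0 < k" "0 < q" "0 < n"
    and "\<exists>A. S_template (n + 1) q A"
    and "\<exists>B. S_template k p B"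
  shows "\<exists>C. S_template (n + k) (p * q) C"
proof -
  obtain A where A: "S_template (n + 1) q A" using assms by blast
  obtain B where B: "S_template k p B" using assms by blast
  have Asub: "A i \<subseteq> {1..q}" if "i \<in> {1..n+1}" for i
    using A that unfolding S_template_def by blast
  have Bsub: "B j \<subseteq> {1..p}" if "j \<in> {1..k}" for j
    using B that unfolding S_template_def by blast
  have Aun: "\<exists>i\<in>{1..n+1}. a \<in> A i" if "a \<in> {1..q}" for a
    using A that unfolding S_template_def by blast
  have Bun: "\<exists>j\<in>{1..k}. b \<in> B j" if "b \<in> {1..p}" for b
    using B that unfolding S_template_def by blast
  have Adis: "False" if "i \<in> {1..n+1}" "j \<in> {1..n+1}" "i \<noteq> j" "a \<in> A i" "a \<in> A j" for i j a
    using A that unfolding S_template_def by blast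
  have Bdis: "False" if "i \<in> {1..k}" "j \<in> {1..k}" "i \<noteq> j" "a \<in> B i" "a \<in> B j" for i j a
    using B that unfolding S_template_def by blast
  have Asf: "x + y \<notin> A i" if "i \<in> {1..n+1}" "x \<in> A i" "y \<in> A i" for i x y
    using A that unfolding S_template_def sum_free_def by blast
  have Bsf: "x + y \<notin> B i" if "i \<in> {1..k}" "x \<in> B i" "y \<in> B i" for i x y
    using B that unfolding S_template_def sum_free_def by blast
  have Awr: "x + y - q \<notin> A i" if "i \<in> {1..n}" "x \<in> A i" "y \<in> A i" "x + y > q" for i x y
    using A that unfolding S_template_def by auto
  have Bwr: "x + y - p \<notin> B i" if "i \<in> {1..k-1}" "x \<in> B i" "y \<in> B i" "x + y > p" for i x y
    using B that unfolding S_template_def by blast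
  define AA where "AA i = (if i \<le> n then A i else if i < n+k then {1..q} else A (n+1))" for i
  define BB where "BB i = (if i \<le> n then B k else if i < n+k then B (i-n) else B k)" for i
  define C where "C i = {p*(a-1)+b | a b. a \<in> AA i \<and> b \<in> BB i}" for i
  have AAsub: "AA i \<subseteq> {1..q}" if "i \<in> {1..n+k}" for i
    using that Asub unfolding AA_def by auto
  have BBsub: "BB i \<subseteq> {1..p}" if "i \<in> {1..n+k}" for i
  proof (cases "n < i \<and> i < n+k")
    case True
    then have "i-n \<in> {1..k}" by auto
    then show ?thesis using True Bsub[of "i-n"] unfolding BB_def by auto
  next
    case False
    then show ?thesis using Bsub[of k] assms(2) unfolding BB_def by auto
  qed
  have BBsf: "x + y \<notin> BB i" if "i \<in> {1..n+k}" "x \<in> BB i" "y \<in> BB i" for i x y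
  proof (cases "n < i \<and> i < n+k")
    case True
    then have "i-n \<in> {1..k}" by auto
    then show ?thesis using True that Bsf[of "i-n" x y] unfolding BB_def by auto
  next
    case False
    then show ?thesis using that Bsf[of k x y] assms(2) unfolding BB_def by (auto split: if_splits)
  qed
  have memC: "\<exists>a b. x = p*(a-1)+b \<and> a \<in> AA i \<and> b \<in> BB i \<and> 1 \<le> a \<and> a \<le> q \<and> 0 < b \<and> b \<le> p"
    if xC: "x \<in> C i" and iI: "i \<in> {1..n+k}" for x i
  proof -
    obtain a b where "x = p*(a-1)+b" "a \<in> AA i" "b \<in> BB i" using xC unfolding C_def by blast
    then show ?thesis using AAsub[OF iI] BBsub[OF iI] by fastforce
  qed
  have U: "(\<Union>i\<in>{1..n+k}. C i) = {1..p*q}"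
  proof
    show "(\<Union>i\<in>{1..n+k}. C i) \<subseteq> {1..p*q}"
    proof
      fix x assume "x \<in> (\<Union>i\<in>{1..n+k}. C i)"
      then obtain i where i: "i \<in> {1..n+k}" "x \<in> C i" by blast
      obtain a b where ab: "x = p*(a-1)+b" "1 \<le> a" "a \<le> q" "0 < b" "b \<le> p"
        using memC[OF i(2) i(1)] by blast
      have "p*(a-1) \<le> p*(q-1)" using ab by simp
      moreover have "x \<ge> 1" using ab by simp
      moreover have "p*(q-1) + p = p*q" using assms(3)
        by (metis Suc_diff_1 add.commute mult_Suc_right)
      ultimately have "1 \<le> x \<and> x \<le> p*q" using ab(1,5) by linarith
      then show "x \<in> {1..p*q}" by simp
    qed
  next
    show "{1..p*q} \<subseteq> (\<Union>i\<in>{1..n+k}. C i)"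
    proof
      fix x assume x: "x \<in> {1..p*q}"
      define a where "a = (x-1) div p + 1"
      define b where "b = (x-1) mod p + 1"
      have xab: "x = p*(a-1)+b" using x unfolding a_def b_def
        by (simp add: add.commute)
      have b1: "b \<in> {1..p}" unfolding b_def using assms(1)
        by (simp add: Suc_leI)
      have "x-1 < q*p" using x by (auto simp: mult.commute)
      then have "(x-1) div p < q" by (rule less_mult_imp_div_less)
      then have a1: "a \<in> {1..q}" unfolding a_def by simp
      obtain j where j: "j \<in> {1..k}" "b \<in> B j" using Bun[OF b1] by blast
      obtain i where i: "i \<in> {1..n+1}" "a \<in> A i" using Aun[OF a1] by blast
      show "x \<in> (\<Union>i\<in>{1..n+k}. C i)"
      proof (cases "j < k")
        case True
        have "x \<in> C (n+j)" unfolding C_def AA_def BB_def using True j a1 xab by auto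
        then show ?thesis using j True by force
      next
        case False
        then have jk: "j = k" using j by auto
        show ?thesis
        proof (cases "i \<le> n")
          case True
          have "x \<in> C i" unfolding C_def AA_def BB_def using True j jk i xab by auto
          then show ?thesis using i True by force
        next
          case False
          then have "i = n+1" using i by auto
          then have "x \<in> C (n+k)" unfolding C_def AA_def BB_def using j jk i xab assms(2) by auto
          then show ?thesis using assms(2) by force
        qed
      qed
    qed
  qed
  have D: "\<forall>i\<in>{1..n+k}. \<forall>j\<in>{1..n+k}. i \<noteq> j \<longrightarrow> C i \<inter> C j = {}"
  proof (intro ballI impI)
    fix i j assume i: "i \<in> {1..n+k}" and j: "j \<in> {1..n+k}" and ij: "i \<noteq> j"
    show "C i \<inter> C j = {}"
    proof (rule ccontr)
      assume "C i \<inter> C j \<noteq> {}"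
      then obtain x where "x \<in> C i" "x \<in> C j" by blast
      then obtain a b a' b' where r: "x = p*(a-1)+b" "a \<in> AA i" "b \<in> BB i" "1 \<le> a" "0 < b" "b \<le> p"
        "x = p*(a'-1)+b'" "a' \<in> AA j" "b' \<in> BB j" "1 \<le> a'" "0 < b'" "b' \<le> p"
        using memC i j by meson
      then have "a-1 = a'-1 \<and> b = b'" using rep_uniq[of b p b' "a-1" "a'-1"] by auto
      then have e: "a = a'" "b = b'" using r by auto
      have hb: "b \<in> BB i" "b \<in> BB j" using r e by auto
      have ha: "a \<in> AA i" "a \<in> AA j" using r e by auto
      have k1: "k \<in> {1..k}" using assms(2) by auto
      show False
      proof (cases "i \<le> n")
        case ci: True
        have i1: "i \<in> {1..n+1}" using i ci by auto
        have bi: "b \<in> B k" "a \<in> A i" using hb(1) ha(1) ci by (simp_all add: AA_def BB_def)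
        show False
        proof (cases "j \<le> n")
          case True
          have "a \<in> A j" using ha(2) True by (simp add: AA_def)
          moreover have "j \<in> {1..n+1}" using j True by auto
          ultimately show False using Adis[OF i1 _ ij bi(2)] by blast
        next
          case cj: False
          show False
          proof (cases "j < n+k")
            case True
            have "b \<in> B (j-n)" using hb(2) True cj by (simp add: BB_def)
            moreover have "j-n \<in> {1..k}" "k \<noteq> j-n" using j True cj by auto
            ultimately show False using Bdis[OF k1 _ _ bi(1)] by blast
          next
            case False
            have "a \<in> A (n+1)" using ha(2) False cj by (simp add: AA_def)
            moreover have "n+1 \<in> {1..n+1}" "i \<noteq> n+1" using ci by auto
            ultimately show False using Adis[OF i1 _ _ bi(2)] by blast
          qed
        qed
      next
        case ci: False
        show False
        proof (cases "i < n+k")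
          case ci2: True
          have bi: "b \<in> B (i-n)" using hb(1) ci ci2 by (simp add: BB_def)
          have i1: "i-n \<in> {1..k}" "i-n \<noteq> k" using i ci ci2 by auto
          show False
          proof (cases "j \<le> n")
            case True
            have "b \<in> B k" using hb(2) True by (simp add: BB_def)
            then show False using Bdis[OF i1(1) k1 i1(2) bi] by blast
          next
            case cj: False
            show False
            proof (cases "j < n+k")
              case True
              have "b \<in> B (j-n)" using hb(2) True cj by (simp add: BB_def)
              moreover have "j-n \<in> {1..k}" "i-n \<noteq> j-n" using j True cj ci ij by auto
              ultimately show False using Bdis[OF i1(1) _ _ bi] by blast
            next
              case False
              have "b \<in> B k" using hb(2) False cj by (simp add: BB_def)
              then show False using Bdis[OF i1(1) k1 i1(2) bi] by blast
            qed
          qed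
        next
          case ci2: False
          then have ii: "i = n+k" using i by auto
          have bi: "b \<in> B k" "a \<in> A (n+1)" using hb(1) ha(1) ii assms(2) by (simp_all add: AA_def BB_def)
          show False
          proof (cases "j \<le> n")
            case True
            have "a \<in> A j" using ha(2) True by (simp add: AA_def)
            moreover have "j \<in> {1..n+1}" "n+1 \<noteq> j" "n+1 \<in> {1..n+1}" using j True by auto
            ultimately show False using Adis[OF _ _ _ bi(2)] by blast
          next
            case False
            have "j < n+k" using ii ij j by auto
            then have "b \<in> B (j-n)" using hb(2) False by (simp add: BB_def)
            moreover have "j-n \<in> {1..k}" "k \<noteq> j-n" using j False \<open>j < n+k\<close> by auto
            ultimately show False using Bdis[OF k1 _ _ bi(1)] by blast
          qed
        qed
      qed
    qed
  qed
  have SF: "sum_free (C i)" if i: "i \<in> {1..n+k}" for i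
    unfolding sum_free_def
  proof (intro ballI)
    fix x y assume x: "x \<in> C i" and y: "y \<in> C i"
    show "x + y \<notin> C i"
    proof
      assume z: "x + y \<in> C i"
      obtain a1 b1 where r1: "x = p*(a1-1)+b1" "a1 \<in> AA i" "b1 \<in> BB i" "1 \<le> a1" "0 < b1" "b1 \<le> p"
        using memC[OF x i] by blast
      obtain a2 b2 where r2: "y = p*(a2-1)+b2" "a2 \<in> AA i" "b2 \<in> BB i" "1 \<le> a2" "0 < b2" "b2 \<le> p"
        using memC[OF y i] by blast
      obtain a3 b3 where r3: "x+y = p*(a3-1)+b3" "a3 \<in> AA i" "b3 \<in> BB i" "1 \<le> a3" "0 < b3" "b3 \<le> p"
        using memC[OF z i] by blast
      have "(b1+b2 \<le> p \<and> b3 = b1+b2) \<or> (b1+b2 > p \<and> b3 = b1+b2-p \<and> a3 = a1+a2)"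
        using key_sum[of b1 p b2 b3 a1 a2 a3] r1 r2 r3 by auto
      then show False
      proof
        assume "b1+b2 \<le> p \<and> b3 = b1+b2"
        then show False using BBsf[OF i r1(3) r2(3)] r3 by auto
      next
        assume h: "b1+b2 > p \<and> b3 = b1+b2-p \<and> a3 = a1+a2"
        show False
        proof (cases "n < i \<and> i < n+k")
          case True
          have ii: "i-n \<in> {1..k-1}" using True by auto
          have m: "b1 \<in> B (i-n)" "b2 \<in> B (i-n)" "b1+b2-p \<in> B (i-n)"
            using r1(3) r2(3) r3(3) h True by (auto simp: BB_def)
          show False using Bwr[OF ii m(1,2)] h m(3) by blast
        next
          case False
          show False
          proof (cases "i \<le> n")
            case True
            have m: "a1 \<in> A i" "a2 \<in> A i" "a1+a2 \<in> A i" using r1(2) r2(2) r3(2) h True by (auto simp: AA_def)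
            have "i \<in> {1..n+1}" using i True by auto
            then show False using Asf m by blast
          next
            case c2: False
            have m: "a1 \<in> A (n+1)" "a2 \<in> A (n+1)" "a1+a2 \<in> A (n+1)" using r1(2) r2(2) r3(2) h c2 False by (auto simp: AA_def)
            have "n+1 \<in> {1..n+1}" by auto
            then show False using Asf m by blast
          qed
        qed
      qed
    qed
  qed
  have WR: "\<forall>x\<in>C i. \<forall>y\<in>C i. x + y > p*q \<longrightarrow> x + y - p*q \<notin> C i" if i0: "i \<in> {1..n+k-1}" for i
  proof (intro ballI impI)
    have i: "i \<in> {1..n+k}" using i0 by auto
    fix x y assume x: "x \<in> C i" and y: "y \<in> C i" and gt: "x + y > p*q"
    show "x + y - p*q \<notin> C i"
    proof
      assume z: "x + y - p*q \<in> C i"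
      obtain a1 b1 where r1: "x = p*(a1-1)+b1" "a1 \<in> AA i" "b1 \<in> BB i" "1 \<le> a1" "0 < b1" "b1 \<le> p"
        using memC[OF x i] by blast
      obtain a2 b2 where r2: "y = p*(a2-1)+b2" "a2 \<in> AA i" "b2 \<in> BB i" "1 \<le> a2" "0 < b2" "b2 \<le> p"
        using memC[OF y i] by blast
      obtain a3 b3 where r3: "x+y-p*q = p*(a3-1)+b3" "a3 \<in> AA i" "b3 \<in> BB i" "1 \<le> a3" "0 < b3" "b3 \<le> p"
        using memC[OF z i] by blast
      have "x + y = p*(a3-1)+b3 + p*q" using r3(1) gt by linarith
      then have eq: "p*(a1-1)+b1 + (p*(a2-1)+b2) = p*(a3-1)+b3 + p*q" using r1(1) r2(1) by simp
      have "(b1+b2 \<le> p \<and> b3 = b1+b2) \<or> (b1+b2 > p \<and> b3 = b1+b2-p \<and> a1+a2 > q \<and> a3 = a1+a2-q)"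
        using key_wrap[OF r1(5,6) r2(5,6) r3(5,6) r1(4) r2(4) r3(4) eq] .
      then show False
      proof
        assume "b1+b2 \<le> p \<and> b3 = b1+b2"
        then show False using BBsf[OF i r1(3) r2(3)] r3 by auto
      next
        assume h: "b1+b2 > p \<and> b3 = b1+b2-p \<and> a1+a2 > q \<and> a3 = a1+a2-q"
        show False
        proof (cases "n < i")
          case True
          have ilt: "i < n+k" using i0 assms(2) by auto
          have ii: "i-n \<in> {1..k-1}" using True i0 by auto
          have m: "b1 \<in> B (i-n)" "b2 \<in> B (i-n)" "b1+b2-p \<in> B (i-n)"
            using r1(3) r2(3) r3(3) h True ilt by (auto simp: BB_def)
          show False using Bwr[OF ii m(1,2)] h m(3) by blast
        next
          case False
          have m: "a1 \<in> A i" "a2 \<in> A i" "a1+a2-q \<in> A i" using r1(2) r2(2) r3(2) h False by (auto simp: AA_def)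
          have "i \<in> {1..n}" using i0 False by auto
          then show False using Awr[OF _ m(1) m(2)] h m(3) by blast
        qed
      qed
    qed
  qed
  have "S_template (n + k) (p * q) C"
    unfolding S_template_def
  proof (intro conjI)
    show "(\<Union>i\<in>{1..n+k}. C i) = {1..p*q}" by (rule U)
    show "\<forall>i\<in>{1..n+k}. \<forall>j\<in>{1..n+k}. i \<noteq> j \<longrightarrow> C i \<inter> C j = {}" by (rule D)
    show "\<forall>i\<in>{1..n+k}. sum_free (C i)" using SF by (intro ballI)
    show "\<forall>i\<in>{1..n+k-1}. \<forall>x\<in>C i. \<forall>y\<in>C i. x + y > p*q \<longrightarrow> x + y - p*q \<notin> C i"
      by (rule ballI, erule WR)
  qed
  then show ?thesis by blast
qed

end
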